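(* Let $A$ be a $K$-algebra with centre $Z(A)$ that admits a set of generators $\{a_i\mid i\in I\}$ such that, with $\Delta=\{\mathrm{ad}_{a_i}\mid i\in I\}\subseteq\mathrm{Der}_{Z(A)}(A)$, the algebra $A$ is $\Delta$-locally nilpotent. Then every nonzero ideal of $A$ has nonzero intersection with $Z(A)$.
   Context: $\mathrm{ad}_a(f)=af-fa$. For $i\ge1$, $\Delta^i=\{\delta_1\cdots\delta_i\mid\delta_j\in\Delta\}$; $N_\Delta(A)=\bigcup_{i\geq0}\{x\in A\mid\Delta^{i+1}x=0\}$. $A$ is $\Delta$-locally nilpotent if $A=N_\Delta(A)$. *)

theory Defs
  imports Main "HOL.Vector_Spaces"
begin

definition is_K_algebra :: "('k::field \<Rightarrow> 'a::ring_1 \<Rightarrow> 'a) \<Rightarrow> bool" where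
  "is_K_algebra scale \<longleftrightarrow> vector_space scale \<and>
     (\<forall>c x y. scale c (x * y) = scale c x * y \<and> scale c (x * y) = x * scale c y)"

inductive_set gen_subalg :: "('k \<Rightarrow> 'a::ring_1 \<Rightarrow> 'a) \<Rightarrow> 'a set \<Rightarrow> 'a set"
  for scale :: "'k \<Rightarrow> 'a \<Rightarrow> 'a" and S :: "'a set" where
  gen: "x \<in> S \<Longrightarrow> x \<in> gen_subalg scale S"
| one: "1 \<in> gen_subalg scale S"
| zero: "0 \<in> gen_subalg scale S"
| add: "x \<in> gen_subalg scale S \<Longrightarrow> y \<in> gen_subalg scale S \<Longrightarrow> x + y \<in> gen_subalg scale S"
| mult: "x \<in> gen_subalg scale S \<Longrightarrow> y \<in> gen_subalg scale S \<Longrightarrow> x * y \<in> gen_subalg scale S"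
| smult: "x \<in> gen_subalg scale S \<Longrightarrow> scale c x \<in> gen_subalg scale S"

definition centre :: "'a::ring_1 set" where
  "centre = {z. \<forall>x. z * x = x * z}"

text \<open>Two-sided ideal (K-linearity is automatic in a unital K-algebra).\<close>
definition two_sided_ideal :: "'a::ring_1 set \<Rightarrow> bool" where
  "two_sided_ideal J \<longleftrightarrow> 0 \<in> J \<and> (\<forall>x\<in>J. \<forall>y\<in>J. x + y \<in> J) \<and> (\<forall>x\<in>J. - x \<in> J)
     \<and> (\<forall>x\<in>J. \<forall>r. r * x \<in> J \<and> x * r \<in> J)"

definition ad :: "'a::ring \<Rightarrow> 'a \<Rightarrow> 'a" where
  "ad a f = a * f - f * a"

text \<open>Delta^k x = 0: every product of k elements of Delta annihilates x.\<close>
definition pow_annihilates :: "('a \<Rightarrow> 'a) set \<Rightarrow> nat \<Rightarrow> 'a::zero \<Rightarrow> bool" where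
  "pow_annihilates D k x \<longleftrightarrow>
     (\<forall>ds. length ds = k \<longrightarrow> set ds \<subseteq> D \<longrightarrow> foldr (\<circ>) ds id x = 0)"

definition locally_nilpotent :: "('a::zero \<Rightarrow> 'a) set \<Rightarrow> bool" where
  "locally_nilpotent D \<longleftrightarrow> (\<forall>x::'a. \<exists>i. pow_annihilates D (i + 1) x)"

end

theory Submission
  imports Defs
begin

lemma comm_gen:
  assumes K: "is_K_algebra scale" and z: "z \<in> gen_subalg scale G"
    and c: "\<forall>g\<in>G. y * g = g * y"
  shows "y * z = z * y"
  using z
proof induction
  case (gen x) then show ?case using c by blast
next
  case (one) then show ?case by simp
next
  case (zero) then show ?case by simp
next
  case (add x z) then show ?case by (simp add: distrib_left distrib_right)
next
  case (mult x z) then show ?case by (metis mult.assoc)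
next
  case (smult x c)
  from K have h: "\<And>c x y. scale c (x * y) = scale c x * y \<and> scale c (x * y) = x * scale c y"
    unfolding is_K_algebra_def by blast
  have "y * scale c x = scale c (y * x)" using h by metis
  also have "\<dots> = scale c (x * y)" using smult by simp
  also have "\<dots> = scale c x * y" using h by metis
  finally show ?case .
qed

lemma ideal_closed:
  assumes J: "two_sided_ideal J" and x: "x \<in> J" and ds: "set ds \<subseteq> ad ` G"
  shows "foldr (\<circ>) ds id x \<in> J"
  using ds
proof (induction ds)
  case Nil then show ?case using x by simp
next
  case (Cons d ds)
  then obtain g where d: "d = ad g" by auto
  have y: "foldr (\<circ>) ds id x \<in> J" by (metis Cons.IH Cons.prems insert_subset list.set(2))
  let ?y = "foldr (\<circ>) ds id x"
  have "g * ?y \<in> J" "- (?y * g) \<in> J" using J y unfolding two_sided_ideal_def by blast+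
  then have "g * ?y + - (?y * g) \<in> J" using J unfolding two_sided_ideal_def by blast
  then have "ad g ?y \<in> J" by (simp add: ad_def)
  moreover have "foldr (\<circ>) (d # ds) id x = ad g ?y" using d by simp
  ultimately show ?case by metis
qed

theorem corollary1p9:
  fixes scale :: "'k::field \<Rightarrow> 'a::ring_1 \<Rightarrow> 'a" and G :: "'a set"
  assumes "is_K_algebra scale"
    and "gen_subalg scale G = UNIV"
    and "locally_nilpotent (ad ` G)"
  shows "\<forall>J::'a set. two_sided_ideal J \<and> J \<noteq> {0} \<longrightarrow> J \<inter> centre \<noteq> {0}"
proof (intro allI impI)
  fix J :: "'a set"
  assume H: "two_sided_ideal J \<and> J \<noteq> {0}"
  then have J: "two_sided_ideal J" and "J \<noteq> {0}" by auto
  have "0 \<in> J" using J unfolding two_sided_ideal_def by blast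
  then obtain x where x: "x \<in> J" "x \<noteq> 0" using \<open>J \<noteq> {0}\<close> by blast
  let ?P = "\<lambda>k. pow_annihilates (ad ` G) k x"
  obtain i where "?P (i+1)" using assms(3) unfolding locally_nilpotent_def by blast
  define k where "k = (LEAST k. ?P k)"
  have Pk: "?P k" unfolding k_def by (rule LeastI) fact
  have "k \<noteq> 0"
  proof
    assume "k = 0"
    then show False using Pk x unfolding pow_annihilates_def by auto
  qed
  then obtain m where km: "k = Suc m" by (cases k) auto
  have "\<not> ?P m"
  proof
    assume "?P m"
    then have "k \<le> m" unfolding k_def by (rule Least_le)
    then show False using km by simp
  qed
  then obtain ds where ds: "length ds = m" "set ds \<subseteq> ad ` G" "foldr (\<circ>) ds id x \<noteq> 0"
    unfolding pow_annihilates_def by blast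
  define y where "y = foldr (\<circ>) ds id x"
  have yJ: "y \<in> J" unfolding y_def using ideal_closed[OF J x(1) ds(2)] .
  have c: "\<forall>g\<in>G. y * g = g * y"
  proof
    fix g assume g: "g \<in> G"
    have "foldr (\<circ>) (ad g # ds) id x = 0"
      using Pk km ds g unfolding pow_annihilates_def by (metis image_eqI insert_subset length_Cons list.set(2))
    then have "ad g y = 0" by (simp add: y_def)
    then show "y * g = g * y" by (simp add: ad_def)
  qed
  have "y \<in> centre" unfolding centre_def
    using comm_gen[OF assms(1) _ c] assms(2) by auto
  then show "J \<inter> centre \<noteq> {0}" using yJ ds(3) y_def by auto
qed

end
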